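(* If $S$ is an infinite meet-semilattice, then the lattice $Sub_\wedge(S)$ of meet-subsemilattices of $S$ (ordered by inclusion) contains a chain isomorphic to $\mathbb{Q}$. Consequently, $Sub_\wedge(S)$ is order-scattered if and only if $S$ is finite.
   Context: A poset is order-scattered if it contains no subset order-isomorphic to the chain $\mathbb{Q}$ of rationals. *)

theory Defs
  imports Complex_Main
begin

text \<open>Meet-subsemilattices of a meet-semilattice (the whole type 'a), i.e. subsets
closed under binary meet. The empty set is included.\<close>
definition meet_subsemilattices :: "('a::semilattice_inf) set set" where
  "meet_subsemilattices = {A. \<forall>x\<in>A. \<forall>y\<in>A. inf x y \<in> A}"

definition contains_copy_of_rat :: "('b::order) set \<Rightarrow> bool" where
  "contains_copy_of_rat P \<longleftrightarrow>
     (\<exists>f :: rat \<Rightarrow> 'b. range f \<subseteq> P \<and> (\<forall>x y. f x \<le> f y \<longleftrightarrow> x \<le> y))"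

definition order_scattered :: "('b::order) set \<Rightarrow> bool" where
  "order_scattered P \<longleftrightarrow> \<not> contains_copy_of_rat P"

end

theory Submission
  imports Defs "HOL-Library.Ramsey" "HOL-Library.Countable"
begin

lemma copy_from:
  fixes h :: "rat \<Rightarrow> 'a::semilattice_inf" and F :: "'a set \<Rightarrow> 'a set"
  assumes inj: "inj h" and rh: "range h \<subseteq> C"
    and sub: "\<And>A. A \<subseteq> C \<Longrightarrow> F A \<in> meet_subsemilattices"
    and mono: "\<And>A B. A \<subseteq> B \<Longrightarrow> F A \<subseteq> F B"
    and ret: "\<And>A. A \<subseteq> C \<Longrightarrow> F A \<inter> C = A"
  shows "contains_copy_of_rat (meet_subsemilattices :: 'a set set)"
  unfolding contains_copy_of_rat_def
proof (intro exI[of _ "\<lambda>q. F (h ` {r. r < q})"] conjI allI)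
  show "range (\<lambda>q. F (h ` {r. r < q})) \<subseteq> meet_subsemilattices"
  proof (rule image_subsetI)
    fix q :: rat
    have "h ` {r. r < q} \<subseteq> C" using rh by auto
    thus "F (h ` {r. r < q}) \<in> meet_subsemilattices" by (rule sub)
  qed
next
  fix x y :: rat
  show "F (h ` {r. r < x}) \<subseteq> F (h ` {r. r < y}) \<longleftrightarrow> x \<le> y"
  proof
    assume "x \<le> y" thus "F (h ` {r. r < x}) \<subseteq> F (h ` {r. r < y})"
      by (intro mono) auto
  next
    assume le: "F (h ` {r. r < x}) \<subseteq> F (h ` {r. r < y})"
    show "x \<le> y"
    proof (rule ccontr)
      assume "\<not> x \<le> y" hence yx: "y < x" by simp
      have s1: "h ` {r. r < x} \<subseteq> C" "h ` {r. r < y} \<subseteq> C" using rh by auto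
      have "h y \<in> F (h ` {r. r < x}) \<inter> C" using ret[OF s1(1)] yx by auto
      hence "h y \<in> F (h ` {r. r < y}) \<inter> C" using le by auto
      hence "h y \<in> h ` {r. r < y}" using ret[OF s1(2)] by simp
      then obtain r where "r < y" "h y = h r" by auto
      thus False using inj by (auto dest: injD)
    qed
  qed
qed

definition M :: "'a::semilattice_inf set \<Rightarrow> 'a set" where
  "M A = {Inf_fin X | X. finite X \<and> X \<noteq> {} \<and> X \<subseteq> A}"

lemma M_sub: "M A \<in> meet_subsemilattices"
  unfolding meet_subsemilattices_def M_def
proof (clarify)
  fix X Y :: "'a set"
  assume "finite X" "X \<noteq> {}" "X \<subseteq> A" "finite Y" "Y \<noteq> {}" "Y \<subseteq> A"
  thus "\<exists>Z. inf (Inf_fin X) (Inf_fin Y) = Inf_fin Z \<and> finite Z \<and> Z \<noteq> {} \<and> Z \<subseteq> A"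
    by (intro exI[of _ "X \<union> Y"]) (auto simp: Inf_fin.union)
qed

lemma M_mono: "A \<subseteq> B \<Longrightarrow> M A \<subseteq> M B"
  unfolding M_def by blast

lemma M_ret:
  assumes anti: "\<forall>x\<in>C. \<forall>y\<in>C. x \<noteq> y \<longrightarrow> \<not> x \<le> y" and AC: "A \<subseteq> C"
  shows "M A \<inter> C = A"
proof
  show "A \<subseteq> M A \<inter> C" using AC unfolding M_def
    by (auto intro!: exI[of _ "{_}"])
next
  show "M A \<inter> C \<subseteq> A"
  proof
    fix x assume "x \<in> M A \<inter> C"
    then obtain X where X: "finite X" "X \<noteq> {}" "X \<subseteq> A" "x = Inf_fin X" "x \<in> C"
      unfolding M_def by auto
    then obtain y where y: "y \<in> X" by auto
    have "x \<le> y" using X y by (simp add: Inf_fin.coboundedI)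
    hence "x = y" using anti X y AC by blast
    thus "x \<in> A" using y X by auto
  qed
qed

lemma part1:
  assumes inf: "infinite (UNIV :: ('a::semilattice_inf) set)"
  shows "contains_copy_of_rat (meet_subsemilattices :: 'a set set)"
proof -
  define f :: "'a set \<Rightarrow> nat" where "f X = (if \<exists>x\<in>X. \<exists>y\<in>X. x < y then 0 else 1)" for X
  obtain Y t where Y: "infinite Y" "t < 2" "\<forall>x\<in>Y. \<forall>y\<in>Y. x\<noteq>y \<longrightarrow> f {x, y} = t"
  proof -
    have "\<forall>x\<in>UNIV. \<forall>y\<in>UNIV. x \<noteq> y \<longrightarrow> f {x, y} < 2" by (simp add: f_def)
    from Ramsey2[OF inf this] show ?thesis using that by blast
  qed
  obtain g :: "nat \<Rightarrow> 'a" where g: "inj g" "range g \<subseteq> Y"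
    using infinite_countable_subset[OF Y(1)] by blast
  define h :: "rat \<Rightarrow> 'a" where "h = g \<circ> to_nat"
  have hi: "inj (h :: rat \<Rightarrow> 'a)" unfolding h_def using g(1) by (simp add: inj_compose)
  have hr: "range h \<subseteq> Y" unfolding h_def using g(2) by auto
  show ?thesis
  proof (cases "t = 0")
    case True
    have ch: "\<forall>x\<in>Y. \<forall>y\<in>Y. x \<le> y \<or> y \<le> x"
    proof (intro ballI)
      fix x y assume "x \<in> Y" "y \<in> Y"
      thus "x \<le> y \<or> y \<le> x" using Y(3) True unfolding f_def
        by (cases "x = y") (auto split: if_splits simp: less_le)
    qed
    show ?thesis
    proof (rule copy_from[OF hi hr, where F = id])
      fix A assume "A \<subseteq> Y"
      thus "id A \<in> meet_subsemilattices" unfolding meet_subsemilattices_def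
      proof (intro CollectI ballI)
        fix x y assume "x \<in> id A" "y \<in> id A"
        hence "x \<in> Y" "y \<in> Y" "x \<in> A" "y \<in> A" using \<open>A \<subseteq> Y\<close> by auto
        thus "inf x y \<in> id A" using ch by (metis id_apply inf_absorb1 inf_absorb2)
      qed
    qed auto
  next
    case False
    hence t1: "t = 1" using Y(2) by simp
    have anti: "\<forall>x\<in>Y. \<forall>y\<in>Y. x \<noteq> y \<longrightarrow> \<not> x \<le> y"
    proof (intro ballI impI)
      fix x y assume "x \<in> Y" "y \<in> Y" "x \<noteq> y"
      thus "\<not> x \<le> y" using Y(3) t1 unfolding f_def
        by (auto split: if_splits simp: less_le)
    qed
    show ?thesis
      by (rule copy_from[OF hi hr, where F = M]) (auto simp: M_sub M_mono M_ret[OF anti])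
  qed
qed

theorem theorem6p1:
  shows "(infinite (UNIV :: ('a::semilattice_inf) set) \<longrightarrow>
            contains_copy_of_rat (meet_subsemilattices :: 'a set set))
         \<and> (order_scattered (meet_subsemilattices :: 'a set set) \<longleftrightarrow> finite (UNIV :: 'a set))"
proof -
  have fin: "\<not> contains_copy_of_rat (meet_subsemilattices :: 'a set set)"
    if "finite (UNIV :: 'a set)"
  proof
    assume "contains_copy_of_rat (meet_subsemilattices :: 'a set set)"
    then obtain f :: "rat \<Rightarrow> 'a set" where f: "\<forall>x y. f x \<le> f y \<longleftrightarrow> x \<le> y"
      unfolding contains_copy_of_rat_def by blast
    have "inj f" by (rule injI) (metis f order_antisym order_refl)
    moreover have "finite (range f)"
      using that by (simp add: finite_subset[OF subset_UNIV] Finite_Set.finite_set)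
    ultimately have "finite (UNIV :: rat set)" using finite_imageD by blast
    thus False using infinite_UNIV_char_0 by blast
  qed
  show ?thesis using part1 fin unfolding order_scattered_def by blast
qed

end
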